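(* Consider, for $x\ge0$ and $a>0$, the planar system $$\dot x=1,\qquad \dot y=-ay-\sin\!\left[\pi x\left(1+\tfrac12\lambda\right)\right],$$ with $\lambda=\operatorname{sign}(y)$ for $y\ne0$ and $\lambda\in(-1,1)$ on $y=0$. This system does not have non-sliding periodic solutions.
   Context: For $y>0$ the system is $\dot y=-ay-\sin(3\pi x/2)$ and for $y<0$ it is $\dot y=-ay-\sin(\pi x/2)$. The sliding manifold is $\Lambda^N=\{(x,0):x\in(\frac{2n}{3},2n),\ n\ge1\}$, the set of points of $y=0$ where some $\lambda\in(-1,1)$ gives $\sin[\pi x(1+\lambda/2)]=0$; a solution may remain on $y=0$ (with $\dot x=1$) only while on $\Lambda^N$. A periodic solution is called sliding if part of it lies on $\Lambda^N$ (here: if at least one of its points lies on $\Lambda^N$), and non-sliding otherwise. *)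

theory Defs
  imports "HOL-Analysis.Analysis"
begin

definition rhs :: "real \<Rightarrow> real \<Rightarrow> real \<Rightarrow> real \<Rightarrow> real" where
  "rhs a x y l = - a * y - sin (pi * x * (1 + l / 2))"

text \<open>Since xdot = 1 we parametrise by x.\<close>
definition is_solution :: "real \<Rightarrow> real \<Rightarrow> (real \<Rightarrow> real) \<Rightarrow> bool" where
  "is_solution a x0 y \<longleftrightarrow> x0 \<ge> 0 \<and>
     (\<exists>lam :: real \<Rightarrow> real.
        (\<forall>s\<ge>x0. (y s \<noteq> 0 \<longrightarrow> lam s = sgn (y s)) \<and>
                  (y s = 0 \<longrightarrow> -1 < lam s \<and> lam s < 1)) \<and>
        (\<forall>x\<ge>x0. ((\<lambda>s. rhs a s (y s) (lam s)) has_integral (y x - y x0)) {x0..x}))"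

text \<open>Periodic solution: (x(t), y(t)) = (t + x0, y(t + x0)) with y periodic.\<close>
definition periodic_solution :: "real \<Rightarrow> real \<Rightarrow> (real \<Rightarrow> real) \<Rightarrow> bool" where
  "periodic_solution a x0 y \<longleftrightarrow> is_solution a x0 y \<and>
     (\<exists>T>0. \<forall>x\<ge>x0. y (x + T) = y x)"

text \<open>x-coordinates of the sliding manifold Lambda^N = {(x,0) : x in (2n/3, 2n), n >= 1}.\<close>
definition Lambda_N :: "real set" where
  "Lambda_N = {x. \<exists>n::nat. n \<ge> 1 \<and> 2 * real n / 3 < x \<and> x < 2 * real n}"

definition sliding :: "real \<Rightarrow> (real \<Rightarrow> real) \<Rightarrow> bool" where
  "sliding x0 y \<longleftrightarrow> (\<exists>x\<ge>x0. y x = 0 \<and> x \<in> Lambda_N)"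

end

theory Submission
  imports Defs
begin

lemma sin_int_bound:
  fixes k u X :: real
  assumes k: "k > 0" and uX: "u \<le> X"
  obtains I where "((\<lambda>s. sin (pi * s * k)) has_integral I) {u..X}" "\<bar>I\<bar> \<le> 2 / (pi * k)"
proof -
  let ?F = "\<lambda>s. - cos (pi * s * k) / (pi * k)"
  have "((\<lambda>s. sin (pi * s * k)) has_integral (?F X - ?F u)) {u..X}"
  proof (rule fundamental_theorem_of_calculus)
    show "(?F has_vector_derivative sin (pi * x * k)) (at x within {u..X})" for x
      using k unfolding has_vector_derivative_def
      by (intro derivative_eq_intros | force simp: field_simps)+
  qed (use uX in auto)
  moreover have "\<bar>?F X - ?F u\<bar> \<le> 2 / (pi * k)"
  proof -
    have "\<bar>?F X - ?F u\<bar> = \<bar>cos (pi * u * k) - cos (pi * X * k)\<bar> / (pi * k)"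
      using k by (simp add: field_simps abs_divide)
    also have "\<dots> \<le> 2 / (pi * k)"
    proof (rule divide_right_mono)
      show "\<bar>cos (pi * u * k) - cos (pi * X * k)\<bar> \<le> 2"
        using abs_cos_le_one[of "pi * u * k"] abs_cos_le_one[of "pi * X * k"]
        unfolding abs_le_iff by linarith
    qed (use k in simp)
    finally show ?thesis .
  qed
  ultimately show ?thesis using that by blast
qed

lemma per_iter:
  fixes y :: "real \<Rightarrow> real"
  assumes "\<forall>x\<ge>x0. y (x + T) = y x" "x \<ge> x0" "T > 0"
  shows "y (x + real j * T) = y x"
proof (induction j)
  case (Suc j)
  have "y (x + real j * T + T) = y (x + real j * T)"
  proof (intro assms(1)[rule_format])
    have "0 \<le> real j * T" using assms(3) by simp
    then show "x0 \<le> x + real j * T" using assms(2) by linarith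
  qed
  then show ?case using Suc by (simp add: algebra_simps)
qed simp

lemma core:
  fixes a T c0 k \<sigma> x0 x1 :: real and y :: "real \<Rightarrow> real"
  assumes a: "a > 0" and T: "T > 0" and k: "k \<ge> 1/2" and sig: "\<bar>\<sigma>\<bar> = 1"
    and x01: "x0 \<le> x1"
    and cont: "\<And>b. continuous_on {x1..b} y"
    and pos: "\<And>s. s \<ge> x1 \<Longrightarrow> \<sigma> * y s > 0"
    and per: "\<forall>x\<ge>x0. y (x + T) = y x"
    and int: "\<And>X. X \<ge> x1 \<Longrightarrow> ((\<lambda>s. - a * y s - sin (pi * s * k)) has_integral (y X - y x1)) {x1..X}"
  shows False
proof -
  have "continuous_on {x1..x1+T} (\<lambda>s. \<sigma> * y s)"
    by (intro continuous_intros cont)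
  then obtain m where m: "m \<in> {x1..x1+T}" "\<And>s. s \<in> {x1..x1+T} \<Longrightarrow> \<sigma> * y m \<le> \<sigma> * y s"
    using continuous_attains_inf[of "{x1..x1+T}" "\<lambda>s. \<sigma> * y s"] T by auto
  define c where "c = \<sigma> * y m"
  have c: "c > 0" using pos m unfolding c_def by auto
  have lb: "\<sigma> * y s \<ge> c" if s: "s \<ge> x1" for s
  proof -
    define j where "j = nat \<lfloor>(s - x1) / T\<rfloor>"
    have "real j = of_int \<lfloor>(s - x1) / T\<rfloor>" using s T unfolding j_def by simp
    then have j1: "real j \<le> (s - x1) / T" and j2: "(s - x1) / T < real j + 1"
      by linarith+
    define r where "r = s - real j * T"
    have "real j * T \<le> s - x1" using j1 T by (simp add: field_simps)
    moreover have "s - x1 < (real j + 1) * T" using j2 T by (simp add: field_simps)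
    ultimately have r: "r \<in> {x1..x1+T}" unfolding r_def by (auto simp: algebra_simps)
    have "y s = y r" using per_iter[OF per, of r j] r x01 T unfolding r_def by auto
    then show ?thesis using m(2)[OF r] unfolding c_def by simp
  qed
  define B where "B = 2 / (pi * k)"
  obtain n :: nat where n: "real n > B / (a * c * T)" using reals_Archimedean2 by blast
  define X where "X = x1 + real n * T"
  have X: "X \<ge> x1" using T unfolding X_def by simp
  have yX: "y X = y x1" using per_iter[OF per, of x1 n] x01 T unfolding X_def by simp
  have yint: "y integrable_on {x1..X}" by (intro integrable_continuous_interval cont)
  obtain I where I: "((\<lambda>s. sin (pi * s * k)) has_integral I) {x1..X}" "\<bar>I\<bar> \<le> B"
    using sin_int_bound[of k x1 X] k X unfolding B_def by auto
  have h1: "((\<lambda>s. - a * y s - sin (pi * s * k)) has_integral 0) {x1..X}"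
    using int[OF X] yX by simp
  have h2: "((\<lambda>s. - a * y s - sin (pi * s * k)) has_integral (- a * integral {x1..X} y - I)) {x1..X}"
    by (intro has_integral_diff has_integral_mult_right integrable_integral yint I(1))
  have eq: "- a * integral {x1..X} y - I = 0" using h1 h2 has_integral_unique by blast
  have h3: "((\<lambda>s. \<sigma> * y s) has_integral (\<sigma> * integral {x1..X} y)) {x1..X}"
    by (intro has_integral_mult_right integrable_integral yint)
  have "c * (X - x1) \<le> \<sigma> * integral {x1..X} y"
    using has_integral_le[OF has_integral_const_real[of c x1 X] h3] lb X by (auto simp: mult.commute)
  then have "a * c * (X - x1) \<le> a * (\<sigma> * integral {x1..X} y)"
    using a by (simp add: mult.assoc)
  also have "\<dots> = - \<sigma> * I"
  proof -
    have "a * integral {x1..X} y = - I" using eq by linarith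
    then have "\<sigma> * (a * integral {x1..X} y) = \<sigma> * (- I)" by simp
    then show ?thesis by (simp add: algebra_simps)
  qed
  also have "\<dots> \<le> \<bar>I\<bar>" using sig by (cases "\<sigma> \<ge> 0") (auto simp: abs_if)
  also have "\<dots> \<le> B" by (rule I(2))
  finally have "a * c * (real n * T) \<le> B" unfolding X_def by simp
  moreover have "a * c * T > 0" using a c T by simp
  ultimately show False using n by (simp add: field_simps)
qed

theorem theorem3:
  fixes a x0 :: real and y :: "real \<Rightarrow> real"
  assumes "a > 0"
    and "periodic_solution a x0 y"
  shows "sliding x0 y"
proof (rule ccontr)
  assume ns: "\<not> sliding x0 y"
  from assms(2) obtain lam T where x0: "x0 \<ge> 0" and T: "T > 0"
    and per: "\<forall>x\<ge>x0. y (x + T) = y x"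
    and lam: "\<forall>s\<ge>x0. (y s \<noteq> 0 \<longrightarrow> lam s = sgn (y s)) \<and> (y s = 0 \<longrightarrow> -1 < lam s \<and> lam s < 1)"
    and hi: "\<forall>x\<ge>x0. ((\<lambda>s. rhs a s (y s) (lam s)) has_integral (y x - y x0)) {x0..x}"
    unfolding periodic_solution_def is_solution_def by blast
  define g where "g = (\<lambda>s. rhs a s (y s) (lam s))"
  have hi': "X \<ge> x0 \<Longrightarrow> (g has_integral (y X - y x0)) {x0..X}" for X
    using hi unfolding g_def by blast
  have ge1: "x \<in> Lambda_N" if "x \<ge> 1" for x :: real
  proof -
    define n where "n = nat \<lfloor>x\<rfloor>"
    have "real n = of_int \<lfloor>x\<rfloor>" using that unfolding n_def by simp
    moreover have "\<lfloor>x\<rfloor> \<ge> 1" using that by (simp add: le_floor_iff)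
    ultimately have "real n \<le> x" "x < real n + 1" "real n \<ge> 1" using that by linarith+
    then show ?thesis unfolding Lambda_N_def by (intro CollectI exI[of _ n]) auto
  qed
  define x1 where "x1 = max x0 1"
  have x01: "x0 \<le> x1" unfolding x1_def by simp
  have nz: "y s \<noteq> 0" if "s \<ge> x1" for s
    using ns ge1[of s] that unfolding sliding_def x1_def by auto
  have cont0: "continuous_on {x0..b} y" for b
  proof (cases "b \<ge> x0")
    case True
    have "continuous_on {x0..b} (\<lambda>x. y x0 + integral {x0..x} g)"
      by (intro continuous_intros indefinite_integral_continuous_1 has_integral_integrable[OF hi'[OF True]])
    moreover have "y x0 + integral {x0..x} g = y x" if "x \<in> {x0..b}" for x
      using integral_unique[OF hi'[of x]] that by auto
    ultimately show ?thesis using continuous_on_cong by (metis (no_types, lifting))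
  qed simp
  have cont: "continuous_on {x1..b} y" for b
    using continuous_on_subset[OF cont0[of b]] x01 by auto
  define \<sigma> where "\<sigma> = sgn (y x1)"
  have sig: "\<bar>\<sigma>\<bar> = 1" using nz[of x1] unfolding \<sigma>_def by (simp add: abs_sgn)
  have pos: "\<sigma> * y s > 0" if s: "s \<ge> x1" for s
  proof (rule ccontr)
    assume "\<not> \<sigma> * y s > 0"
    have a1: "y x1 \<noteq> 0" "y s \<noteq> 0" using nz s by auto
    consider "y x1 > 0" "y s < 0" | "y x1 < 0" "y s > 0"
      using a1 \<open>\<not> \<sigma> * y s > 0\<close> unfolding \<sigma>_def
      by (cases "y x1 > 0"; cases "y s > 0") (auto simp: sgn_if)
    then show False
    proof cases
      case 1
      have "continuous_on {x1..s} (\<lambda>t. - y t)" by (intro continuous_intros cont)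
      then obtain z where "z \<ge> x1" "z \<le> s" "- y z = 0"
        using IVT'[of "\<lambda>t. - y t" x1 0 s] 1 s by auto
      then show False using nz by auto
    next
      case 2
      then obtain z where "z \<ge> x1" "z \<le> s" "y z = 0"
        using IVT'[of y x1 0 s] cont s by auto
      then show False using nz by auto
    qed
  qed
  have lams: "lam s = \<sigma>" if "s \<ge> x1" for s
  proof -
    have "lam s = sgn (y s)" using lam nz[OF that] that x01 by auto
    moreover have "sgn (y s) = \<sigma>" using pos[OF that] sig unfolding \<sigma>_def
      by (auto simp: sgn_if split: if_splits)
    ultimately show ?thesis by simp
  qed
  have int: "((\<lambda>s. - a * y s - sin (pi * s * (1 + \<sigma> / 2))) has_integral (y X - y x1)) {x1..X}"
    if X: "X \<ge> x1" for X
  proof -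
    have gX: "g integrable_on {x0..X}" using hi'[of X] X x01 by (auto intro: has_integral_integrable)
    have "integral {x0..x1} g + integral {x1..X} g = integral {x0..X} g"
      using Henstock_Kurzweil_Integration.integral_combine[OF x01 X gX] .
    moreover have "integral {x0..x1} g = y x1 - y x0" using integral_unique[OF hi'[OF x01]] .
    moreover have "integral {x0..X} g = y X - y x0" using integral_unique[OF hi'[of X]] X x01 by auto
    ultimately have "integral {x1..X} g = y X - y x1" by simp
    moreover have "g integrable_on {x1..X}" using integrable_subinterval_real[OF gX] x01 by auto
    ultimately have "(g has_integral (y X - y x1)) {x1..X}" using has_integral_integral by metis
    moreover have "g s = - a * y s - sin (pi * s * (1 + \<sigma> / 2))" if "s \<in> {x1..X}" for s
      using lams[of s] that unfolding g_def rhs_def by auto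
    ultimately show ?thesis using has_integral_cong by (metis (no_types, lifting))
  qed
  have k: "1 + \<sigma> / 2 \<ge> 1/2" using sig by (auto simp: abs_if split: if_splits)
  show False using core[OF assms(1) T k sig x01 cont pos per int] by blast
qed

end
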